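(* Let $d\ge1$, $D=\{1,\dots,d\}$, let $\Pi=(\Pi_{ij})_{i,j\in D}$ be a $d\times d$ stochastic matrix, and let $\mathcal{E}_H:\mathcal{M}_d\otimes\mathcal{M}_d\to\mathcal{M}_d$ be the linear extension of $\mathcal{E}_H(a\otimes b)=a\diamond P_H(b)$. Let $n\in\mathbb{N}$, $r\ge 0$ and $a_m=(a^{(m)}_{kl})_{k,l\in D}\in\mathcal{M}_d$ for $n\le m\le n+r$. Then $$\mathcal{E}_H\big(a_n\otimes\mathcal{E}_H(a_{n+1}\otimes\cdots\otimes\mathcal{E}_H(a_{n+r}\otimes \mathbf{1}_d)\cdots)\big)$$ $$=\sum_{\substack{k_n,\dots,k_{n+r}\in D\\ l_n,\dots,l_{n+r}\in D}}\Big(\prod_{m=n}^{n+r-1}\sqrt{\Pi_{k_mk_{m+1}}\Pi_{l_ml_{m+1}}}\,a^{(m)}_{k_ml_m}\Big)\Big(a^{(n+r)}_{k_{n+r}l_{n+r}}\sum_{j\in D}\sqrt{\Pi_{k_{n+r}j}\Pi_{l_{n+r}j}}\Big)e_{k_nl_n}.$$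
   Context: $\mathcal{M}_d$ is the algebra of complex $d\times d$ matrices with identity $\mathbf{1}_d$ and matrix units $e_{ij}$. A stochastic matrix has nonnegative entries and row sums $1$. $P_H:\mathcal{M}_d\to\mathcal{M}_d$ is defined by $P_H(A)=\sum_{i,j,k,l\in D}\sqrt{\Pi_{ik}\Pi_{jl}}\,a_{kl}\,e_{ij}$ for $A=(a_{kl})$, and $\diamond$ denotes the Schur (entrywise) product of matrices. *)

theory Defs
  imports "HOL-Analysis.Analysis"
begin

text \<open>Index set D is modelled by a finite type 'd; matrices in M_d are complex^'d^'d.\<close>

definition stochastic :: "real^'d^'d \<Rightarrow> bool" where
  "stochastic P \<longleftrightarrow> (\<forall>i j. P$i$j \<ge> 0) \<and> (\<forall>i. (\<Sum>j\<in>UNIV. P$i$j) = 1)"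

definition one_mat :: "complex^'d^'d" where
  "one_mat = (\<chi> i j. if i = j then 1 else 0)"

definition mat_unit :: "'d \<Rightarrow> 'd \<Rightarrow> complex^'d^'d" where
  "mat_unit k l = (\<chi> i j. if i = k \<and> j = l then 1 else 0)"

definition mat_smult :: "complex \<Rightarrow> complex^'d^'d \<Rightarrow> complex^'d^'d" where
  "mat_smult c A = (\<chi> i j. c * A$i$j)"

definition schur :: "complex^'d^'d \<Rightarrow> complex^'d^'d \<Rightarrow> complex^'d^'d" where
  "schur A B = (\<chi> i j. A$i$j * B$i$j)"

definition P_H :: "real^'d^'d \<Rightarrow> complex^'d^'d \<Rightarrow> complex^'d^'d" where
  "P_H P A = (\<chi> i j. \<Sum>k\<in>UNIV. \<Sum>l\<in>UNIV.
      complex_of_real (sqrt (P$i$k * P$j$l)) * A$k$l)"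

definition E_H :: "real^'d^'d \<Rightarrow> complex^'d^'d \<Rightarrow> complex^'d^'d \<Rightarrow> complex^'d^'d" where
  "E_H P a b = schur a (P_H P b)"

fun nested :: "real^'d^'d \<Rightarrow> (nat \<Rightarrow> complex^'d^'d) \<Rightarrow> nat \<Rightarrow> nat \<Rightarrow> complex^'d^'d" where
  "nested P a n 0 = E_H P (a n) one_mat"
| "nested P a n (Suc r) = E_H P (a n) (nested P a (Suc n) r)"

end

theory Submission
  imports Defs
begin


lemma sum_PiE_insert:
  assumes "x \<notin> S"
  shows "(\<Sum>k\<in>insert x S \<rightarrow>\<^sub>E T. g k) = (\<Sum>y\<in>T. \<Sum>k\<in>S \<rightarrow>\<^sub>E T. g (k(x:=y)))"
proof -
  have "(\<Sum>k\<in>insert x S \<rightarrow>\<^sub>E T. g k) = (\<Sum>k\<in>(\<lambda>(y, g). g(x := y)) ` (T \<times> (S \<rightarrow>\<^sub>E T)). g k)"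
    by (simp add: PiE_insert_eq)
  also have "\<dots> = (\<Sum>(y,k)\<in>T \<times> (S \<rightarrow>\<^sub>E T). g (k(x:=y)))"
    by (subst sum.reindex[OF inj_combinator[OF assms]]) (simp add: case_prod_unfold)
  also have "\<dots> = (\<Sum>y\<in>T. \<Sum>k\<in>S \<rightarrow>\<^sub>E T. g (k(x:=y)))"
    by (rule sum.cartesian_product[symmetric])
  finally show ?thesis .
qed

lemma sum_delta2:
  fixes f :: "'d::finite \<Rightarrow> 'd \<Rightarrow> complex"
  shows "(\<Sum>p\<in>UNIV. \<Sum>q\<in>UNIV. if x = p \<and> y = q then f p q else 0) = f x y"
proof -
  have "(\<Sum>p\<in>UNIV. \<Sum>q\<in>UNIV. if x = p \<and> y = q then f p q else 0)
      = (\<Sum>p\<in>UNIV. if x = p then (\<Sum>q\<in>UNIV. if y = q then f p q else 0) else 0)"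
    by (intro sum.cong) auto
  also have "\<dots> = f x y" by simp
  finally show ?thesis .
qed

lemma sum_delta2':
  fixes f :: "'d::finite \<Rightarrow> 'd \<Rightarrow> complex"
  shows "(\<Sum>p\<in>UNIV. \<Sum>q\<in>UNIV. if p = x \<and> q = y then f p q else 0) = f x y"
  using sum_delta2[of x y f] by (simp add: eq_commute)

lemma sum_diag:
  fixes f :: "'d::finite \<Rightarrow> 'd \<Rightarrow> complex"
  shows "(\<Sum>k\<in>UNIV. \<Sum>l\<in>UNIV. f k l * (if k = l then 1 else 0)) = (\<Sum>k\<in>UNIV. f k k)"
  by (intro sum.cong refl) (simp add: if_distrib cong: if_cong)

lemma sum_delta4:
  fixes F :: "'d::finite \<Rightarrow> 'k \<Rightarrow> 'd \<Rightarrow> 'k \<Rightarrow> complex"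
  shows "(\<Sum>y\<in>UNIV. \<Sum>k\<in>A. \<Sum>ya\<in>UNIV. \<Sum>ka\<in>B. if y = i \<and> ya = j then F y k ya ka else 0)
     = (\<Sum>k\<in>A. \<Sum>ka\<in>B. F i k j ka)"
proof -
  have 1: "(\<Sum>ya\<in>UNIV. \<Sum>ka\<in>B. if y = i \<and> ya = j then F y k ya ka else 0)
     = (if y = i then \<Sum>ka\<in>B. F y k j ka else 0)" for y k
  proof (cases "y = i")
    case True
    have "(\<Sum>ya\<in>UNIV. \<Sum>ka\<in>B. if y = i \<and> ya = j then F y k ya ka else 0)
       = (\<Sum>ya\<in>UNIV. if ya = j then \<Sum>ka\<in>B. F y k ya ka else 0)"
      using True by (intro sum.cong refl) auto
    also have "\<dots> = (\<Sum>ka\<in>B. F y k j ka)" by simp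
    finally show ?thesis using True by simp
  qed simp
  have "(\<Sum>y\<in>UNIV. \<Sum>k\<in>A. \<Sum>ya\<in>UNIV. \<Sum>ka\<in>B. if y = i \<and> ya = j then F y k ya ka else 0)
     = (\<Sum>y\<in>UNIV. if y = i then \<Sum>k\<in>A. \<Sum>ka\<in>B. F y k j ka else 0)"
    by (simp only: 1) (intro sum.cong refl, auto)
  also have "\<dots> = (\<Sum>k\<in>A. \<Sum>ka\<in>B. F i k j ka)" by simp
  finally show ?thesis .
qed

lemma sum_collapse:
  fixes s :: "'d::finite \<Rightarrow> 'd \<Rightarrow> complex"
  shows "(\<Sum>p\<in>UNIV. \<Sum>q\<in>UNIV. s p q * (\<Sum>k\<in>A. \<Sum>l\<in>B. if f k = p \<and> g l = q then G k l else 0))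
     = (\<Sum>k\<in>A. \<Sum>l\<in>B. s (f k) (g l) * G k l)"
proof -
  let ?X = "\<lambda>p q k l. if p = f k \<and> q = g l then s p q * G k l else 0"
  have "(\<Sum>p\<in>UNIV. \<Sum>q\<in>UNIV. s p q * (\<Sum>k\<in>A. \<Sum>l\<in>B. if f k = p \<and> g l = q then G k l else 0))
     = (\<Sum>p\<in>UNIV. \<Sum>q\<in>UNIV. \<Sum>k\<in>A. \<Sum>l\<in>B. ?X p q k l)"
    by (simp add: sum_distrib_left if_distrib eq_commute cong: if_cong)
  also have "\<dots> = (\<Sum>p\<in>UNIV. \<Sum>k\<in>A. \<Sum>q\<in>UNIV. \<Sum>l\<in>B. ?X p q k l)"
    by (rule sum.cong[OF refl], rule sum.swap)
  also have "\<dots> = (\<Sum>k\<in>A. \<Sum>p\<in>UNIV. \<Sum>q\<in>UNIV. \<Sum>l\<in>B. ?X p q k l)"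
    by (rule sum.swap)
  also have "\<dots> = (\<Sum>k\<in>A. \<Sum>p\<in>UNIV. \<Sum>l\<in>B. \<Sum>q\<in>UNIV. ?X p q k l)"
    by (rule sum.cong[OF refl], rule sum.cong[OF refl], rule sum.swap)
  also have "\<dots> = (\<Sum>k\<in>A. \<Sum>l\<in>B. \<Sum>p\<in>UNIV. \<Sum>q\<in>UNIV. ?X p q k l)"
    by (rule sum.cong[OF refl], rule sum.swap)
  also have "\<dots> = (\<Sum>k\<in>A. \<Sum>l\<in>B. s (f k) (g l) * G k l)"
    by (simp only: sum_delta2')
  finally show ?thesis .
qed

definition CC :: "real^'d::finite^'d \<Rightarrow> (nat \<Rightarrow> complex^'d^'d) \<Rightarrow> nat \<Rightarrow> nat \<Rightarrow> (nat \<Rightarrow> 'd) \<Rightarrow> (nat \<Rightarrow> 'd) \<Rightarrow> complex" where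
  "CC P a n r k l = (\<Prod>m=n..<n+r. complex_of_real (sqrt (P$(k m)$(k (m+1)) * P$(l m)$(l (m+1)))) * a m $ (k m) $ (l m))
          * (a (n+r) $ (k (n+r)) $ (l (n+r))
             * (\<Sum>j\<in>UNIV. complex_of_real (sqrt (P$(k (n+r))$j * P$(l (n+r))$j))))"

definition RR where
  "RR P a n r = (\<Sum>k\<in>{n..n+r} \<rightarrow>\<^sub>E (UNIV::'d::finite set). \<Sum>l\<in>{n..n+r} \<rightarrow>\<^sub>E (UNIV::'d set).
       mat_smult (CC P a n r k l) (mat_unit (k n) (l n)))"

lemma RR_entry: "RR P a n r $ i $ j = (\<Sum>k\<in>{n..n+r} \<rightarrow>\<^sub>E (UNIV::'d::finite set). \<Sum>l\<in>{n..n+r} \<rightarrow>\<^sub>E (UNIV::'d set).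
       if k n = i \<and> l n = j then CC P a n r k l else 0)"
  unfolding RR_def by (auto simp: mat_smult_def mat_unit_def intro!: sum.cong)

lemma CC_Suc:
  assumes k: "k \<in> {Suc n..Suc n+r} \<rightarrow>\<^sub>E (UNIV::'d::finite set)"
  shows "CC P a n (Suc r) (k(n:=i)) (l(n:=j)) =
    a n $ i $ j * (complex_of_real (sqrt (P$i$(k (Suc n)) * P$j$(l (Suc n)))) * CC P a (Suc n) r k l)"
proof -
  have e: "{n..<n + Suc r} = insert n {Suc n..<Suc n + r}" by auto
  have c: "(\<Prod>m=Suc n..<Suc n+r. complex_of_real (sqrt (P$((k(n:=i)) m)$((k(n:=i)) (m+1)) * P$((l(n:=j)) m)$((l(n:=j)) (m+1)))) * a m $ ((k(n:=i)) m) $ ((l(n:=j)) m))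
    = (\<Prod>m=Suc n..<Suc n+r. complex_of_real (sqrt (P$(k m)$(k (m+1)) * P$(l m)$(l (m+1)))) * a m $ (k m) $ (l m))"
    by (intro prod.cong) auto
  show ?thesis unfolding CC_def e
    by (simp add: c algebra_simps del: prod.op_ivl_Suc)
qed

lemma main:
  fixes P :: "real^'d^'d" and a :: "nat \<Rightarrow> complex^'d^'d"
  shows "nested P a n r = RR P a n r"
proof (induction r arbitrary: n)
  case 0
  show ?case
  proof (rule vec_eq_iff[THEN iffD2, rule_format], rule vec_eq_iff[THEN iffD2, rule_format])
    fix i j
    have "{n..n+0} = insert n {}" by simp
    show "nested P a n 0 $ i $ j = RR P a n 0 $ i $ j"
      unfolding RR_entry
      apply (simp only: \<open>{n..n+0} = insert n {}\<close> sum_PiE_insert empty_iff not_False_eq_True PiE_empty_domain)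
      apply (simp only: fun_upd_same)
      apply (simp only: sum_delta2' sum.insert finite.emptyI empty_iff not_False_eq_True sum.empty add_0_right)
      apply (simp add: CC_def E_H_def schur_def P_H_def one_mat_def sum_diag)
      done
  qed
next
  case (Suc r)
  show ?case
  proof (rule vec_eq_iff[THEN iffD2, rule_format], rule vec_eq_iff[THEN iffD2, rule_format])
    fix i j
    have e: "{n..n+Suc r} = insert n {Suc n..Suc n+r}" by auto
    have "RR P a n (Suc r) $ i $ j = (\<Sum>k\<in>{Suc n..Suc n+r} \<rightarrow>\<^sub>E (UNIV::'d set). \<Sum>l\<in>{Suc n..Suc n+r} \<rightarrow>\<^sub>E (UNIV::'d set).
       CC P a n (Suc r) (k(n:=i)) (l(n:=j)))"
      unfolding RR_entry e
      apply (subst sum_PiE_insert, simp)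
      apply (subst sum_PiE_insert, simp)
      apply (simp only: fun_upd_same sum_delta4)
      done
    also have "\<dots> = (\<Sum>k\<in>{Suc n..Suc n+r} \<rightarrow>\<^sub>E (UNIV::'d set). \<Sum>l\<in>{Suc n..Suc n+r} \<rightarrow>\<^sub>E (UNIV::'d set).
       a n $ i $ j * (complex_of_real (sqrt (P$i$(k (Suc n)) * P$j$(l (Suc n)))) * CC P a (Suc n) r k l))"
      by (intro sum.cong refl CC_Suc) assumption
    also have "\<dots> = a n $ i $ j * (\<Sum>k\<in>{Suc n..Suc n+r} \<rightarrow>\<^sub>E (UNIV::'d set). \<Sum>l\<in>{Suc n..Suc n+r} \<rightarrow>\<^sub>E (UNIV::'d set).
       complex_of_real (sqrt (P$i$(k (Suc n)) * P$j$(l (Suc n)))) * CC P a (Suc n) r k l)"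
      by (simp add: sum_distrib_left)
    also have "\<dots> = nested P a n (Suc r) $ i $ j"
      unfolding nested.simps Suc.IH E_H_def schur_def P_H_def RR_entry
      by (simp add: sum_collapse[where f = "\<lambda>k. k (Suc n)" and g = "\<lambda>k. k (Suc n)"])
    finally show "nested P a n (Suc r) $ i $ j = RR P a n (Suc r) $ i $ j" by simp
  qed
qed

theorem mainTheorem2:
  fixes P :: "real^'d^'d" and a :: "nat \<Rightarrow> complex^'d^'d" and n r :: nat
  assumes "stochastic P"
  shows "nested P a n r =
    (\<Sum>k\<in>{n..n+r} \<rightarrow>\<^sub>E (UNIV::'d set). \<Sum>l\<in>{n..n+r} \<rightarrow>\<^sub>E (UNIV::'d set).
       mat_smult
         ((\<Prod>m=n..<n+r. complex_of_real (sqrt (P$(k m)$(k (m+1)) * P$(l m)$(l (m+1)))) * a m $ (k m) $ (l m))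
          * (a (n+r) $ (k (n+r)) $ (l (n+r))
             * (\<Sum>j\<in>UNIV. complex_of_real (sqrt (P$(k (n+r))$j * P$(l (n+r))$j)))))
         (mat_unit (k n) (l n)))"
  using main[of P a n r] unfolding RR_def CC_def by simp

end
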